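(* Let $a\in\mathbb F^*$ and let $g,h\in\mathcal R$ satisfy $x^n-a=hg$, and let $\widehat h^{l}=\rho_l(\theta^{-n}(h))$. Then $$M^\theta_a(\overline g)\,M^\theta_c(\overline{a^{-1}h})=M^\theta_a(\overline g)\,M^\theta_{a^{-1}}(\overline{\widehat h^{l}})^{\mathsf T}=0,\qquad\text{where } c=\gamma(a,g).$$
   Context: $\mathbb F$ is a finite field, $\theta\in\mathrm{Aut}(\mathbb F)$, $\mathcal R=\mathbb F[x;\theta]$ the skew polynomial ring (elements $\sum f_ix^i$ with left coefficients, $xb=\theta(b)x$). Integer powers of $\theta$ act on $\mathcal R$ coefficientwise. Fix $n\in\mathbb N$. For $b\in\mathbb F^*$, $\mathcal S_b=\mathcal R/\mathcal R(x^n-b)$, $\overline f$ is the coset of $f$ (in $M^\theta_b(\overline f)$ taken in $\mathcal S_b$), $\mathfrak v_b:\mathcal S_b\to\mathbb F^n$ the inverse of $(c_0,\dots,c_{n-1})\mapsto\overline{\sum_{i=0}^{n-1}c_ix^i}$. $M^\theta_b(\overline f)$ is the $n\times n$ matrix whose row with index $i$ ($0\le i\le n-1$) is $\mathfrak v_b(\overline{x^if})$. For a right divisor $g=\sum g_ix^i$ of $x^n-a$, $\gamma(a,g)=ag_0^{-1}\theta^n(g_0)$. For nonzero $f=\sum_{i=0}^tf_ix^i$ with $f_t\neq0$, $\rho_l(f)=\sum_{i=0}^t\theta^i(f_{t-i})x^i$. *)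

theory Defs
  imports "HOL-Computational_Algebra.Polynomial" "Jordan_Normal_Form.Matrix"
begin

text \<open>Skew polynomials over a field are represented by their (left) coefficient
  sequences, stored in the type 'a poly; only the multiplication differs.\<close>

definition field_aut :: "('a::field \<Rightarrow> 'a) \<Rightarrow> bool" where
  "field_aut \<theta> \<longleftrightarrow> bij \<theta> \<and> (\<forall>x y. \<theta> (x + y) = \<theta> x + \<theta> y) \<and> (\<forall>x y. \<theta> (x * y) = \<theta> x * \<theta> y)"

definition skew_mult :: "('a::field \<Rightarrow> 'a) \<Rightarrow> 'a poly \<Rightarrow> 'a poly \<Rightarrow> 'a poly" where
  "skew_mult \<theta> f g = (\<Sum>i\<le>degree f. \<Sum>j\<le>degree g. monom (coeff f i * (\<theta> ^^ i) (coeff g j)) (i + j))"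

definition xn_minus :: "nat \<Rightarrow> 'a::field \<Rightarrow> 'a poly" where
  "xn_minus n b = monom 1 n - [:b:]"

definition skew_rem :: "('a::field \<Rightarrow> 'a) \<Rightarrow> nat \<Rightarrow> 'a \<Rightarrow> 'a poly \<Rightarrow> 'a poly" where
  "skew_rem \<theta> n b f = (THE r. (\<forall>i\<ge>n. coeff r i = 0) \<and>
       (\<exists>q. f = skew_mult \<theta> q (xn_minus n b) + r))"

definition Mtheta :: "('a::field \<Rightarrow> 'a) \<Rightarrow> nat \<Rightarrow> 'a \<Rightarrow> 'a poly \<Rightarrow> 'a mat" where
  "Mtheta \<theta> n b f = mat n n (\<lambda>(i, j). coeff (skew_rem \<theta> n b (skew_mult \<theta> (monom 1 i) f)) j)"

definition gamma :: "('a::field \<Rightarrow> 'a) \<Rightarrow> nat \<Rightarrow> 'a \<Rightarrow> 'a poly \<Rightarrow> 'a" where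
  "gamma \<theta> n a g = a * inverse (coeff g 0) * (\<theta> ^^ n) (coeff g 0)"

definition rho_l :: "('a::field \<Rightarrow> 'a) \<Rightarrow> 'a poly \<Rightarrow> 'a poly" where
  "rho_l \<theta> f = (\<Sum>i\<le>degree f. monom ((\<theta> ^^ i) (coeff f (degree f - i))) i)"

definition theta_neg_pow :: "('a::field \<Rightarrow> 'a) \<Rightarrow> nat \<Rightarrow> 'a poly \<Rightarrow> 'a poly" where
  "theta_neg_pow \<theta> n h = map_poly ((Hilbert_Choice.inv \<theta>) ^^ n) h"

end

theory Submission
  imports Defs
begin

locale skew =
  fixes \<theta> :: "'a::field \<Rightarrow> 'a"
  assumes aut: "field_aut \<theta>"
begin

abbreviation T :: "nat \<Rightarrow> 'a \<Rightarrow> 'a" where "T i \<equiv> \<theta> ^^ i"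

lemma th_add: "\<theta> (x + y) = \<theta> x + \<theta> y" using aut unfolding field_aut_def by blast
lemma th_mult: "\<theta> (x * y) = \<theta> x * \<theta> y" using aut unfolding field_aut_def by blast
lemma th_bij: "bij \<theta>" using aut unfolding field_aut_def by blast
lemma th_inj: "inj \<theta>" using th_bij bij_is_inj by blast
lemma th_0: "\<theta> 0 = 0"
proof -
  have "\<theta> 0 = \<theta> 0 + \<theta> 0" using th_add[of 0 0] by simp
  then show ?thesis by (metis add_cancel_right_right)
qed
lemma th_1: "\<theta> 1 = 1"
proof -
  obtain y where y: "\<theta> y = 1" using th_bij by (metis bij_pointE)
  have "\<theta> 1 * 1 = 1" using th_mult[of 1 y] y by simp
  then show ?thesis by simp
qed
lemma th_eq0: "\<theta> x = 0 \<longleftrightarrow> x = 0"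
  using th_inj th_0 by (metis injD)

lemma T_add[simp]: "T i (x + y) = T i x + T i y"
  by (induction i) (auto simp: th_add)
lemma T_mult[simp]: "T i (x * y) = T i x * T i y"
  by (induction i) (auto simp: th_mult)
lemma T_0[simp]: "T i 0 = 0"
  by (induction i) (auto simp: th_0)
lemma T_1[simp]: "T i 1 = 1"
  by (induction i) (auto simp: th_1)
lemma T_eq0[simp]: "T i x = 0 \<longleftrightarrow> x = 0"
  by (induction i arbitrary: x) (auto simp: th_eq0)
lemma T_uminus[simp]: "T i (- x) = - T i x"
proof -
  have "T i (- x) + T i x = 0" by (metis T_add T_0 add.left_inverse)
  then show ?thesis by (simp add: eq_neg_iff_add_eq_0)
qed
lemma T_minus[simp]: "T i (x - y) = T i x - T i y"
  using T_add[of i x "-y"] T_uminus[of i y] by simp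
lemma T_sum[simp]: "T i (sum f A) = (\<Sum>x\<in>A. T i (f x))"
  by (induction A rule: infinite_finite_induct) auto
lemma T_inverse[simp]: "T i (inverse x) = inverse (T i x)"
proof (cases "x = 0")
  case False
  have "T i (inverse x) * T i x = 1" by (metis T_mult T_1 False left_inverse)
  then show ?thesis by (metis inverse_unique mult.commute)
qed simp
lemma T_T[simp]: "T i (T j x) = T (i + j) x"
  by (simp add: funpow_add)
lemma T_inj: "T i x = T i y \<longleftrightarrow> x = y"
  by (metis T_eq0 T_minus right_minus_eq)

abbreviation sm (infixl "\<diamondop>" 70) where "f \<diamondop> g \<equiv> skew_mult \<theta> f g"

lemma coeff_sm: "coeff (f \<diamondop> g) k = (\<Sum>i\<le>k. coeff f i * T i (coeff g (k - i)))"
proof -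
  have inner: "(\<Sum>j\<le>degree g. if i + j = k then coeff f i * T i (coeff g j) else 0)
      = (if i \<le> k then coeff f i * T i (coeff g (k - i)) else 0)" for i
  proof -
    have "(\<Sum>j\<le>degree g. if i + j = k then coeff f i * T i (coeff g j) else 0)
       = (\<Sum>j\<le>degree g. if j = k - i \<and> i \<le> k then coeff f i * T i (coeff g j) else 0)"
      by (intro sum.cong) auto
    also have "\<dots> = (if i \<le> k \<and> k - i \<le> degree g then coeff f i * T i (coeff g (k - i)) else 0)"
      by (cases "i \<le> k") (auto simp: sum.delta)
    also have "\<dots> = (if i \<le> k then coeff f i * T i (coeff g (k - i)) else 0)"
      by (auto simp: coeff_eq_0)
    finally show ?thesis .
  qed
  have "coeff (f \<diamondop> g) k = (\<Sum>i\<le>degree f. if i \<le> k then coeff f i * T i (coeff g (k - i)) else 0)"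
    unfolding skew_mult_def by (simp add: coeff_sum coeff_monom inner)
  also have "\<dots> = (\<Sum>i\<le>max (degree f) k. if i \<le> k then coeff f i * T i (coeff g (k - i)) else 0)"
    by (intro sum.mono_neutral_left) (auto simp: coeff_eq_0)
  also have "\<dots> = (\<Sum>i\<le>k. coeff f i * T i (coeff g (k - i)))"
    by (intro sum.mono_neutral_cong_right) (auto simp: coeff_eq_0)
  finally show ?thesis .
qed


lemma sm_add_left: "(f + g) \<diamondop> h = f \<diamondop> h + g \<diamondop> h"
  by (rule poly_eqI) (simp add: coeff_sm distrib_right sum.distrib)
lemma sm_add_right: "f \<diamondop> (g + h) = f \<diamondop> g + f \<diamondop> h"
  by (rule poly_eqI) (simp add: coeff_sm distrib_left sum.distrib)
lemma sm_0_left[simp]: "0 \<diamondop> f = 0"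
  by (rule poly_eqI) (simp add: coeff_sm)
lemma sm_0_right[simp]: "f \<diamondop> 0 = 0"
  by (rule poly_eqI) (simp add: coeff_sm)
lemma sm_uminus_left: "(- f) \<diamondop> g = - (f \<diamondop> g)"
  by (rule poly_eqI) (simp add: coeff_sm sum_negf)
lemma sm_uminus_right: "f \<diamondop> (- g) = - (f \<diamondop> g)"
  by (rule poly_eqI) (simp add: coeff_sm sum_negf)
lemma sm_minus_left: "(f - g) \<diamondop> h = f \<diamondop> h - g \<diamondop> h"
  using sm_add_left[of f "-g" h] sm_uminus_left[of g h] by simp
lemma sm_minus_right: "f \<diamondop> (g - h) = f \<diamondop> g - f \<diamondop> h"
  using sm_add_right[of f g "-h"] sm_uminus_right[of f h] by simp
lemma sm_sum_left: "(\<Sum>i\<in>A. f i) \<diamondop> g = (\<Sum>i\<in>A. f i \<diamondop> g)"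
  by (induction A rule: infinite_finite_induct) (auto simp: sm_add_left)
lemma sm_sum_right: "g \<diamondop> (\<Sum>i\<in>A. f i) = (\<Sum>i\<in>A. g \<diamondop> f i)"
  by (induction A rule: infinite_finite_induct) (auto simp: sm_add_right)
lemma sm_smult_left: "Polynomial.smult c f \<diamondop> g = Polynomial.smult c (f \<diamondop> g)"
  by (rule poly_eqI) (simp add: coeff_sm sum_distrib_left mult.assoc)

lemma coeff_monom_sm: "coeff (monom a i \<diamondop> f) k = (if i \<le> k then a * T i (coeff f (k - i)) else 0)"
proof -
  have "coeff (monom a i \<diamondop> f) k = (\<Sum>p\<le>k. if p = i then a * T p (coeff f (k - p)) else 0)"
    unfolding coeff_sm by (intro sum.cong) (auto simp: coeff_monom)
  then show ?thesis by (simp add: sum.delta)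
qed
lemma coeff_sm_monom1: "coeff (f \<diamondop> monom 1 n) k = (if n \<le> k then coeff f (k - n) else 0)"
proof -
  have "coeff (f \<diamondop> monom 1 n) k = (\<Sum>p\<le>k. if p = k - n \<and> n \<le> k then coeff f p else 0)"
    unfolding coeff_sm by (intro sum.cong) (auto simp: coeff_monom)
  then show ?thesis by (simp add: sum.delta)
qed
lemma coeff_const: "coeff [:c:] n = (if n = 0 then c else 0)"
  by (cases n) auto
lemma coeff_sm_const: "coeff (f \<diamondop> [:c:]) k = coeff f k * T k c"
proof -
  have "coeff (f \<diamondop> [:c:]) k = (\<Sum>p\<le>k. if p = k then coeff f p * T p c else 0)"
    unfolding coeff_sm by (intro sum.cong) (auto simp: coeff_const)
  then show ?thesis by (simp add: sum.delta)
qed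
lemma const_sm: "[:c:] \<diamondop> f = Polynomial.smult c f"
proof -
  have e: "[:c:] = monom c 0" by (simp add: monom_0)
  show ?thesis apply (rule poly_eqI) apply (subst e) apply (simp only: coeff_monom_sm coeff_smult) by simp
qed
lemma monom_sm_monom: "monom a i \<diamondop> monom b j = monom (a * T i b) (i + j)"
  by (rule poly_eqI) (auto simp: coeff_monom_sm coeff_monom)
lemma one_sm[simp]: "1 \<diamondop> f = f"
  using const_sm[of 1 f] by (simp add: one_pCons)
lemma sm_one[simp]: "f \<diamondop> 1 = f"
  using coeff_sm_const[of f 1] by (simp add: poly_eq_iff one_pCons)

lemma sm_assoc_mmm: "monom a i \<diamondop> monom b j \<diamondop> monom d l = monom a i \<diamondop> (monom b j \<diamondop> monom d l)"
  by (simp add: monom_sm_monom mult.assoc add.assoc)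
lemma sm_assoc_mm: "monom a i \<diamondop> monom b j \<diamondop> h = monom a i \<diamondop> (monom b j \<diamondop> h)"
proof -
  have "monom a i \<diamondop> monom b j \<diamondop> h = monom a i \<diamondop> monom b j \<diamondop> (\<Sum>l\<le>degree h. monom (coeff h l) l)"
    by (simp add: poly_as_sum_of_monoms)
  also have "\<dots> = monom a i \<diamondop> (monom b j \<diamondop> (\<Sum>l\<le>degree h. monom (coeff h l) l))"
    by (simp add: sm_sum_right sm_assoc_mmm)
  finally show ?thesis by (simp add: poly_as_sum_of_monoms)
qed
lemma sm_assoc_m: "monom a i \<diamondop> g \<diamondop> h = monom a i \<diamondop> (g \<diamondop> h)"
proof -
  have "monom a i \<diamondop> g \<diamondop> h = monom a i \<diamondop> (\<Sum>l\<le>degree g. monom (coeff g l) l) \<diamondop> h"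
    by (simp add: poly_as_sum_of_monoms)
  also have "\<dots> = monom a i \<diamondop> ((\<Sum>l\<le>degree g. monom (coeff g l) l) \<diamondop> h)"
    by (simp add: sm_sum_right sm_sum_left sm_assoc_mm)
  finally show ?thesis by (simp add: poly_as_sum_of_monoms)
qed
lemma sm_assoc: "f \<diamondop> g \<diamondop> h = f \<diamondop> (g \<diamondop> h)"
proof -
  have "f \<diamondop> g \<diamondop> h = (\<Sum>l\<le>degree f. monom (coeff f l) l) \<diamondop> g \<diamondop> h"
    by (simp add: poly_as_sum_of_monoms)
  also have "\<dots> = (\<Sum>l\<le>degree f. monom (coeff f l) l) \<diamondop> (g \<diamondop> h)"
    by (simp add: sm_sum_left sm_assoc_m)
  finally show ?thesis by (simp add: poly_as_sum_of_monoms)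
qed


lemma coeff_sm_high: assumes "degree f + degree g < k" shows "coeff (f \<diamondop> g) k = 0"
  unfolding coeff_sm
proof (intro sum.neutral ballI)
  fix i assume "i \<in> {..k}"
  show "coeff f i * T i (coeff g (k - i)) = 0"
  proof (cases "degree f < i")
    case True then show ?thesis by (simp add: coeff_eq_0)
  next
    case False then have "degree g < k - i" using assms by linarith
    then show ?thesis by (simp add: coeff_eq_0)
  qed
qed

lemma degree_sm_le: "degree (f \<diamondop> g) \<le> degree f + degree g"
  by (rule degree_le) (auto intro: coeff_sm_high)

lemma coeff_sm_top: "coeff (f \<diamondop> g) (degree f + degree g) = lead_coeff f * T (degree f) (lead_coeff g)"
proof -
  let ?k = "degree f + degree g"
  have "coeff (f \<diamondop> g) ?k = (\<Sum>i\<in>{degree f}. coeff f i * T i (coeff g (?k - i)))"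
    unfolding coeff_sm
  proof (rule sum.mono_neutral_right)
    show "\<forall>i\<in>{..?k} - {degree f}. coeff f i * T i (coeff g (?k - i)) = 0"
    proof
      fix i assume i: "i \<in> {..?k} - {degree f}"
      show "coeff f i * T i (coeff g (?k - i)) = 0"
      proof (cases "degree f < i")
        case True then show ?thesis by (simp add: coeff_eq_0)
      next
        case False then have "degree g < ?k - i" using i by auto
        then show ?thesis by (simp add: coeff_eq_0)
      qed
    qed
  qed auto
  then show ?thesis by simp
qed

lemma degree_sm: assumes "f \<noteq> 0" "g \<noteq> 0" shows "degree (f \<diamondop> g) = degree f + degree g"
proof (rule antisym)
  show "degree (f \<diamondop> g) \<le> degree f + degree g" by (rule degree_sm_le)
  have "coeff (f \<diamondop> g) (degree f + degree g) \<noteq> 0"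
    using assms by (simp add: coeff_sm_top)
  then show "degree f + degree g \<le> degree (f \<diamondop> g)" by (rule le_degree)
qed

lemma lead_sm: assumes "f \<noteq> 0" "g \<noteq> 0" shows "lead_coeff (f \<diamondop> g) = lead_coeff f * T (degree f) (lead_coeff g)"
  using degree_sm[OF assms] coeff_sm_top by simp

lemma sm_eq0: "f \<diamondop> g = 0 \<longleftrightarrow> f = 0 \<or> g = 0"
proof
  assume h: "f \<diamondop> g = 0"
  show "f = 0 \<or> g = 0"
  proof (rule ccontr)
    assume "\<not> (f = 0 \<or> g = 0)"
    then have "coeff (f \<diamondop> g) (degree f + degree g) \<noteq> 0" by (simp add: coeff_sm_top)
    then show False using h by simp
  qed
qed auto

lemma sm_cancel_right: assumes "g \<noteq> 0" "f \<diamondop> g = f' \<diamondop> g" shows "f = f'"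
proof -
  have "(f - f') \<diamondop> g = 0" using assms(2) by (simp add: sm_minus_left)
  then show ?thesis using assms(1) by (simp add: sm_eq0)
qed

lemma monom_sm_X: "monom c e \<diamondop> xn_minus n b = monom c (e + n) - monom (c * T e b) e"
proof -
  have "[:b:] = monom b 0" by (simp add: monom_0)
  then show ?thesis unfolding xn_minus_def by (simp add: sm_minus_right monom_sm_monom del: monom_0)
qed

lemma coeff_X: "coeff (xn_minus n b) k = (if k = n then 1 else 0) - (if k = 0 then b else 0)"
  unfolding xn_minus_def by (simp add: coeff_monom coeff_const)

lemma degree_X: "n > 0 \<Longrightarrow> degree (xn_minus n b) = n"
proof (rule antisym)
  show "degree (xn_minus n b) \<le> n" by (rule degree_le) (auto simp: coeff_X)
  assume "n > 0"
  then show "n \<le> degree (xn_minus n b)" by (intro le_degree) (auto simp: coeff_X)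
qed

lemma lead_X: "n > 0 \<Longrightarrow> lead_coeff (xn_minus n b) = 1"
  by (simp add: degree_X coeff_X)

lemma X_nz: assumes "n > 0" shows "xn_minus n (b::'a) \<noteq> 0"
proof
  assume h: "xn_minus n b = 0"
  have "(1::'a) = lead_coeff (xn_minus n b)" using lead_X[OF assms] by simp
  also have "\<dots> = 0" unfolding h by simp
  finally show False by simp
qed

lemma div_exists:
  assumes n: "n > 0"
  shows "\<exists>q r. (\<forall>i\<ge>n. coeff r i = 0) \<and> f = q \<diamondop> xn_minus n b + r"
proof (induction "degree f" arbitrary: f rule: less_induct)
  case less
  show ?case
  proof (cases "degree f < n")
    case True
    then have "\<forall>i\<ge>n. coeff f i = 0" by (auto intro: coeff_eq_0)
    then show ?thesis by (intro exI[of _ 0] exI[of _ f]) simp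
  next
    case False
    define d where "d = degree f"
    define c where "c = lead_coeff f"
    define f' where "f' = f - monom c (d - n) \<diamondop> xn_minus n b"
    have dn: "d - n + n = d" using False d_def by simp
    have f'eq: "f' = f - monom c d + monom (c * T (d - n) b) (d - n)"
      unfolding f'_def monom_sm_X dn by simp
    have hi: "coeff f' k = 0" if "k \<ge> d" for k
    proof (cases "k = d")
      case True
      then show ?thesis using n False unfolding f'eq c_def d_def by (auto simp: coeff_monom)
    next
      case False
      then have "k > d" using that by simp
      then show ?thesis using n unfolding f'eq c_def d_def by (auto simp: coeff_monom coeff_eq_0)
    qed
    have "d > 0" using False n d_def by simp
    then have "degree f' \<le> d - 1" using hi by (intro degree_le) auto
    then have "degree f' < degree f" using \<open>d > 0\<close> d_def by simp
    then obtain q r where qr: "\<forall>i\<ge>n. coeff r i = 0" "f' = q \<diamondop> xn_minus n b + r"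
      using less by blast
    have "f = (q + monom c (d - n)) \<diamondop> xn_minus n b + r"
      using qr(2) unfolding f'_def by (simp add: sm_add_left algebra_simps)
    then show ?thesis using qr(1) by blast
  qed
qed

lemma div_unique:
  assumes n: "n > 0" and r: "\<forall>i\<ge>n. coeff r i = 0" and r': "\<forall>i\<ge>n. coeff r' i = 0"
    and eq: "q \<diamondop> xn_minus n b + r = q' \<diamondop> xn_minus n b + r'"
  shows "r = r'"
proof (cases "q = q'")
  case True then show ?thesis using eq by simp
next
  case False
  have e: "(q - q') \<diamondop> xn_minus n b = r' - r" using eq by (simp add: sm_minus_left algebra_simps)
  have nz: "q - q' \<noteq> 0" using False by simp
  let ?k = "degree (q - q') + n"
  have "coeff ((q - q') \<diamondop> xn_minus n b) ?k = lead_coeff (q - q') * T (degree (q - q')) (lead_coeff (xn_minus n b))"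
    using coeff_sm_top[of "q - q'" "xn_minus n b"] by (simp only: degree_X[OF n])
  also have "\<dots> = lead_coeff (q - q')" by (simp only: lead_X[OF n] T_1 mult_1_right)
  finally have ceq: "coeff ((q - q') \<diamondop> xn_minus n b) ?k = lead_coeff (q - q')" .
  have lnz: "lead_coeff (q - q') \<noteq> 0" using nz by (simp only: leading_coeff_0_iff) simp
  have "coeff ((q - q') \<diamondop> xn_minus n b) ?k \<noteq> 0" using ceq lnz by (simp only:) simp
  moreover have "coeff (r' - r) ?k = 0" using r r' by simp
  ultimately show ?thesis using e by simp
qed

abbreviation rem where "rem n b f \<equiv> skew_rem \<theta> n b f"

lemma rem_props:
  assumes n: "n > 0"
  shows "(\<forall>i\<ge>n. coeff (rem n b f) i = 0) \<and> (\<exists>q. f = q \<diamondop> xn_minus n b + rem n b f)"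
proof -
  have "\<exists>!r. (\<forall>i\<ge>n. coeff r i = 0) \<and> (\<exists>q. f = q \<diamondop> xn_minus n b + r)"
  proof -
    obtain q r where qr: "(\<forall>i\<ge>n. coeff r i = 0)" "f = q \<diamondop> xn_minus n b + r"
      using div_exists[OF n] by blast
    show ?thesis
    proof (rule ex1I[of _ r])
      show "(\<forall>i\<ge>n. coeff r i = 0) \<and> (\<exists>q. f = q \<diamondop> xn_minus n b + r)" using qr by blast
      fix r' assume "(\<forall>i\<ge>n. coeff r' i = 0) \<and> (\<exists>q. f = q \<diamondop> xn_minus n b + r')"
      then obtain q' where r'0: "(\<forall>i\<ge>n. coeff r' i = 0)" and f': "f = q' \<diamondop> xn_minus n b + r'" by blast
      have "q' \<diamondop> xn_minus n b + r' = q \<diamondop> xn_minus n b + r" using f' qr(2) by simp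
      then show "r' = r" by (rule div_unique[OF n r'0 qr(1)])
    qed
  qed
  then show ?thesis unfolding skew_rem_def by (rule theI')
qed

lemma rem_eq:
  assumes n: "n > 0" and r: "\<forall>i\<ge>n. coeff r i = 0" and f: "f = q \<diamondop> xn_minus n b + r"
  shows "rem n b f = r"
proof -
  obtain q' where q': "f = q' \<diamondop> xn_minus n b + rem n b f" using rem_props[OF n] by blast
  have "q' \<diamondop> xn_minus n b + rem n b f = q \<diamondop> xn_minus n b + r" using q' f by simp
  then show ?thesis by (rule div_unique[OF n conjunct1[OF rem_props[OF n]] r])
qed

lemma rem_add: "n > 0 \<Longrightarrow> rem n b (f + g) = rem n b f + rem n b g"
proof -
  assume n: "n > 0"
  obtain q1 where q1: "f = q1 \<diamondop> xn_minus n b + rem n b f" using rem_props[OF n] by blast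
  obtain q2 where q2: "g = q2 \<diamondop> xn_minus n b + rem n b g" using rem_props[OF n] by blast
  have "f + g = (q1 + q2) \<diamondop> xn_minus n b + (rem n b f + rem n b g)"
    using q1 q2 by (simp add: sm_add_left algebra_simps)
  then show ?thesis using rem_props[OF n, of b f] rem_props[OF n, of b g]
    by (intro rem_eq[OF n]) auto
qed

lemma rem_smult: "n > 0 \<Longrightarrow> rem n b (Polynomial.smult c f) = Polynomial.smult c (rem n b f)"
proof -
  assume n: "n > 0"
  obtain q1 where q1: "f = q1 \<diamondop> xn_minus n b + rem n b f" using rem_props[OF n] by blast
  have "Polynomial.smult c f = (Polynomial.smult c q1) \<diamondop> xn_minus n b + Polynomial.smult c (rem n b f)"
    by (subst q1) (simp add: sm_smult_left smult_add_right)
  then show ?thesis using rem_props[OF n, of b f]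
    by (intro rem_eq[OF n]) auto
qed

lemma rem_0: "n > 0 \<Longrightarrow> rem n b 0 = 0"
  by (rule rem_eq[of n 0 0 0]) auto

lemma rem_sum: "n > 0 \<Longrightarrow> rem n b (\<Sum>i\<in>A. f i) = (\<Sum>i\<in>A. rem n b (f i))"
  by (induction A rule: infinite_finite_induct) (auto simp: rem_0 rem_add)

lemma rem_mult_X: "n > 0 \<Longrightarrow> rem n b (q \<diamondop> xn_minus n b) = 0"
  by (rule rem_eq[of n 0 _ q]) auto

lemma rem_small: "n > 0 \<Longrightarrow> \<forall>i\<ge>n. coeff f i = 0 \<Longrightarrow> rem n b f = f"
  by (rule rem_eq[of n f _ 0]) auto


subsection \<open>Inverse powers\<close>

abbreviation Vi :: "nat \<Rightarrow> 'a \<Rightarrow> 'a" where "Vi k \<equiv> (Hilbert_Choice.inv \<theta>) ^^ k"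

lemma inv_th1: "Hilbert_Choice.inv \<theta> (\<theta> x) = x" using th_inj by (simp add: inv_f_f)
lemma inv_th2: "\<theta> (Hilbert_Choice.inv \<theta> x) = x" using th_bij by (simp add: bij_is_surj surj_f_inv_f)

lemma Vi_T[simp]: "Vi k (T k x) = x"
proof (induction k arbitrary: x)
  case (Suc k)
  have "Vi (Suc k) (T (Suc k) x) = Vi k (Hilbert_Choice.inv \<theta> (\<theta> (T k x)))"
    by (simp only: funpow_Suc_right[of k "Hilbert_Choice.inv \<theta>"] funpow.simps(2)[of k \<theta>] o_apply)
  also have "\<dots> = x" using Suc by (simp add: inv_th1)
  finally show ?case .
qed simp

lemma T_Vi[simp]: "T k (Vi k x) = x"
proof (induction k arbitrary: x)
  case (Suc k)
  have "T (Suc k) (Vi (Suc k) x) = T k (\<theta> (Hilbert_Choice.inv \<theta> (Vi k x)))"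
    by (simp only: funpow_Suc_right[of k \<theta>] funpow.simps(2)[of k "Hilbert_Choice.inv \<theta>"] o_apply)
  also have "\<dots> = x" using Suc by (simp add: inv_th2)
  finally show ?case .
qed simp

lemma Vi_add[simp]: "Vi k (x + y) = Vi k x + Vi k y"
proof -
  have "Vi k (x + y) = Vi k (T k (Vi k x + Vi k y))" by simp
  then show ?thesis by (simp only: Vi_T)
qed
lemma Vi_mult[simp]: "Vi k (x * y) = Vi k x * Vi k y"
proof -
  have "Vi k (x * y) = Vi k (T k (Vi k x * Vi k y))" by simp
  then show ?thesis by (simp only: Vi_T)
qed
lemma Vi_0[simp]: "Vi k 0 = 0" using Vi_T[of k 0] by (simp only: T_0)
lemma Vi_1[simp]: "Vi k 1 = 1" using Vi_T[of k 1] by (simp only: T_1)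
lemma Vi_eq0[simp]: "Vi k x = 0 \<longleftrightarrow> x = 0"
proof
  assume h: "Vi k x = 0"
  have "x = T k (Vi k x)" by simp
  also have "\<dots> = 0" using h by simp
  finally show "x = 0" .
qed simp
lemma Vi_uminus[simp]: "Vi k (- x) = - Vi k x"
proof -
  have "Vi k (- x) = Vi k (T k (- Vi k x))" by simp
  then show ?thesis by (simp only: Vi_T)
qed
lemma Vi_minus[simp]: "Vi k (x - y) = Vi k x - Vi k y"
  using Vi_add[of k x "-y"] Vi_uminus[of k y] by simp
lemma Vi_sum: "Vi k (sum f A) = (\<Sum>x\<in>A. Vi k (f x))"
  by (induction A rule: infinite_finite_induct) auto
lemma T_Vi_comm: "T s (Vi k x) = Vi k (T s x)"
proof -
  have "T k (T s (Vi k x)) = T s (T k (Vi k x))" by (simp only: T_T add.commute)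
  then have e: "T k (T s (Vi k x)) = T s x" by (simp only: T_Vi)
  have "Vi k (T s x) = Vi k (T k (T s (Vi k x)))" by (simp only: e)
  then show ?thesis by (simp only: Vi_T)
qed

subsection \<open>Coefficientwise maps\<close>

definition Tp :: "nat \<Rightarrow> 'a poly \<Rightarrow> 'a poly" where "Tp k f = map_poly (T k) f"
definition Vp :: "nat \<Rightarrow> 'a poly \<Rightarrow> 'a poly" where "Vp k f = map_poly (Vi k) f"

lemma coeff_Tp[simp]: "coeff (Tp k f) i = T k (coeff f i)"
  unfolding Tp_def by (simp add: coeff_map_poly)
lemma coeff_Vp[simp]: "coeff (Vp k f) i = Vi k (coeff f i)"
  unfolding Vp_def by (simp add: coeff_map_poly)
lemma degree_Vp[simp]: "degree (Vp k f) = degree f"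
  unfolding Vp_def by (rule degree_map_poly) simp
lemma degree_Tp[simp]: "degree (Tp k f) = degree f"
  unfolding Tp_def by (rule degree_map_poly) simp

lemma Tp_sm: "Tp k (f \<diamondop> g) = Tp k f \<diamondop> Tp k g"
  by (rule poly_eqI) (simp add: coeff_sm add.commute)
lemma Vp_sm: "Vp k (f \<diamondop> g) = Vp k f \<diamondop> Vp k g"
  by (rule poly_eqI) (simp add: coeff_sm Vi_sum T_Vi_comm)
lemma Vp_Tp: "Vp k (Tp k f) = f"
  by (rule poly_eqI) simp
lemma Tp_add: "Tp k (f + g) = Tp k f + Tp k g"
  by (rule poly_eqI) simp
lemma Tp_0: "Tp k 0 = 0"
  by (rule poly_eqI) simp
lemma Tp_sum: "Tp k (\<Sum>i\<in>A. f i) = (\<Sum>i\<in>A. Tp k (f i))"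
  by (induction A rule: infinite_finite_induct) (auto simp: Tp_add Tp_0)
lemma Tp_monom: "Tp k (monom x i) = monom (T k x) i"
  by (rule poly_eqI) (simp add: coeff_monom)
lemma Vp_X: "Vp k (xn_minus n b) = xn_minus n (Vi k b)"
  by (rule poly_eqI) (simp add: coeff_X)

subsection \<open>Reversal\<close>

definition rv :: "nat \<Rightarrow> 'a poly \<Rightarrow> 'a poly" where
  "rv N f = (\<Sum>i\<le>N. monom (T i (coeff f (N - i))) i)"

lemma rho_rv: "rho_l \<theta> f = rv (degree f) f"
  unfolding rho_l_def rv_def ..

lemma coeff_rv: "coeff (rv N f) i = (if i \<le> N then T i (coeff f (N - i)) else 0)"
proof -
  have "coeff (rv N f) i = (\<Sum>j\<le>N. if j = i then T j (coeff f (N - j)) else 0)"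
    unfolding rv_def coeff_sum by (intro sum.cong) (auto simp: coeff_monom)
  then show ?thesis by (simp add: sum.delta)
qed

lemma rv_add: "rv N (f + g) = rv N f + rv N g"
  by (rule poly_eqI) (simp add: coeff_rv)
lemma rv_0: "rv N 0 = 0"
  by (rule poly_eqI) (simp add: coeff_rv)
lemma rv_sum: "rv N (\<Sum>i\<in>A. f i) = (\<Sum>i\<in>A. rv N (f i))"
  by (induction A rule: infinite_finite_induct) (auto simp: rv_add rv_0)
lemma rv_monom: "p \<le> N \<Longrightarrow> rv N (monom x p) = monom (T (N - p) x) (N - p)"
  by (rule poly_eqI) (auto simp: coeff_rv coeff_monom)

lemma rv_sm_mm:
  assumes "p \<le> d" "r \<le> e"
  shows "rv (d + e) (monom x p \<diamondop> monom y r) = Tp d (rv e (monom y r)) \<diamondop> rv d (monom x p)"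
  using assms
  by (simp add: monom_sm_monom rv_monom Tp_monom mult.commute add.commute add.left_commute)

lemma rv_sm_m:
  assumes "p \<le> d" "degree g \<le> e"
  shows "rv (d + e) (monom x p \<diamondop> g) = Tp d (rv e g) \<diamondop> rv d (monom x p)"
proof -
  have "rv (d + e) (monom x p \<diamondop> g) = rv (d + e) (monom x p \<diamondop> (\<Sum>r\<le>e. monom (coeff g r) r))"
    using poly_as_sum_of_monoms'[OF assms(2)] by simp
  also have "\<dots> = (\<Sum>r\<le>e. Tp d (rv e (monom (coeff g r) r)) \<diamondop> rv d (monom x p))"
    by (simp add: sm_sum_right rv_sum rv_sm_mm assms(1))
  also have "\<dots> = Tp d (rv e (\<Sum>r\<le>e. monom (coeff g r) r)) \<diamondop> rv d (monom x p)"
    by (simp add: sm_sum_left rv_sum Tp_sum)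
  finally show ?thesis using poly_as_sum_of_monoms'[OF assms(2)] by simp
qed

lemma rv_sm:
  assumes "degree f \<le> d" "degree g \<le> e"
  shows "rv (d + e) (f \<diamondop> g) = Tp d (rv e g) \<diamondop> rv d f"
proof -
  have "rv (d + e) (f \<diamondop> g) = rv (d + e) ((\<Sum>p\<le>d. monom (coeff f p) p) \<diamondop> g)"
    using poly_as_sum_of_monoms'[OF assms(1)] by simp
  also have "\<dots> = (\<Sum>p\<le>d. Tp d (rv e g) \<diamondop> rv d (monom (coeff f p) p))"
    by (simp add: sm_sum_left rv_sum rv_sm_m assms(2))
  also have "\<dots> = Tp d (rv e g) \<diamondop> rv d (\<Sum>p\<le>d. monom (coeff f p) p)"
    by (simp add: sm_sum_right rv_sum)
  finally show ?thesis using poly_as_sum_of_monoms'[OF assms(1)] by simp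
qed

lemma rho_sm:
  assumes "f \<noteq> 0" "g \<noteq> 0"
  shows "rho_l \<theta> (f \<diamondop> g) = Tp (degree f) (rho_l \<theta> g) \<diamondop> rho_l \<theta> f"
  unfolding rho_rv degree_sm[OF assms] by (rule rv_sm) auto

subsection \<open>Matrices\<close>

lemma poly_as_sum_lt:
  assumes "\<forall>i\<ge>n. coeff r i = 0" shows "r = (\<Sum>l<n. monom (coeff r l) l)"
proof (rule poly_eqI)
  fix k
  have "coeff (\<Sum>l<n. monom (coeff r l) l) k = (\<Sum>l<n. if l = k then coeff r l else 0)"
    unfolding coeff_sum by (intro sum.cong) (auto simp: coeff_monom)
  also have "\<dots> = coeff r k" using assms by (auto simp: sum.delta)
  finally show "coeff r k = coeff (\<Sum>l<n. monom (coeff r l) l) k" by simp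
qed

lemma monom_sm_smult: "monom c l \<diamondop> u = Polynomial.smult c (monom 1 l \<diamondop> u)"
proof -
  have "monom c l = Polynomial.smult c (monom 1 l)" by (simp add: smult_monom)
  then show ?thesis by (simp only: sm_smult_left)
qed

lemma M_mult_entry:
  assumes n: "n > 0" and i: "i < n" and j: "j < n"
  shows "(Mtheta \<theta> n b f * Mtheta \<theta> n c u) $$ (i, j)
       = coeff (rem n c (rem n b (monom 1 i \<diamondop> f) \<diamondop> u)) j"
proof -
  let ?r = "rem n b (monom 1 i \<diamondop> f)"
  have r0: "\<forall>l\<ge>n. coeff ?r l = 0" using rem_props[OF n] by blast
  have "(Mtheta \<theta> n b f * Mtheta \<theta> n c u) $$ (i, j)
      = (\<Sum>l<n. coeff ?r l * coeff (rem n c (monom 1 l \<diamondop> u)) j)"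
    using i j unfolding Mtheta_def by (simp add: scalar_prod_def atLeast0LessThan)
  also have "\<dots> = coeff (rem n c (\<Sum>l<n. Polynomial.smult (coeff ?r l) (monom 1 l \<diamondop> u))) j"
    by (simp add: rem_sum[OF n] rem_smult[OF n] coeff_sum)
  also have "(\<Sum>l<n. Polynomial.smult (coeff ?r l) (monom 1 l \<diamondop> u)) = ?r \<diamondop> u"
  proof -
    have "?r \<diamondop> u = (\<Sum>l<n. monom (coeff ?r l) l) \<diamondop> u" using poly_as_sum_lt[OF r0] by simp
    also have "\<dots> = (\<Sum>l<n. monom (coeff ?r l) l \<diamondop> u)" by (rule sm_sum_left)
    also have "\<dots> = (\<Sum>l<n. Polynomial.smult (coeff ?r l) (monom 1 l \<diamondop> u))"
      by (intro sum.cong refl monom_sm_smult)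
    finally show ?thesis by simp
  qed
  finally show ?thesis .
qed

lemma M_multT_entry:
  assumes n: "n > 0" and i: "i < n" and j: "j < n"
  shows "(Mtheta \<theta> n b f * transpose_mat (Mtheta \<theta> n c u)) $$ (i, j)
       = (\<Sum>l<n. coeff (rem n b (monom 1 i \<diamondop> f)) l * coeff (rem n c (monom 1 j \<diamondop> u)) l)"
  using i j unfolding Mtheta_def by (simp add: scalar_prod_def atLeast0LessThan)


lemma Vp_eq0: "Vp k f = 0 \<longleftrightarrow> f = 0"
proof
  assume "Vp k f = 0"
  then have "coeff (Vp k f) i = 0" for i by simp
  then show "f = 0" by (simp add: poly_eq_iff)
qed (simp add: Vp_def)

lemma coeff_sm_X_low:
  assumes "degree p < N" "N < n"
  shows "coeff (p \<diamondop> xn_minus n b) N = 0"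
proof -
  have "p \<diamondop> xn_minus n b = p \<diamondop> monom 1 n - p \<diamondop> [:b:]"
    unfolding xn_minus_def by (rule sm_minus_right)
  then show ?thesis using assms by (simp add: coeff_sm_monom1 coeff_sm_const coeff_eq_0)
qed

lemma pairing:
  assumes "N < n"
  shows "(\<Sum>l<n. coeff u l * coeff (rv N w) l) = coeff (u \<diamondop> w) N"
proof -
  have "(\<Sum>l<n. coeff u l * coeff (rv N w) l) = (\<Sum>l<n. if l \<le> N then coeff u l * T l (coeff w (N - l)) else 0)"
    by (intro sum.cong) (auto simp: coeff_rv)
  also have "\<dots> = (\<Sum>l\<le>N. coeff u l * T l (coeff w (N - l)))"
    using assms by (intro sum.mono_neutral_cong_right) auto
  finally show ?thesis by (simp add: coeff_sm)
qed

context
  fixes n :: nat and a :: 'a and g h :: "'a poly"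
  assumes n: "n > 0" and a: "a \<noteq> 0" and hg: "xn_minus n a = h \<diamondop> g"
begin

abbreviation cg where "cg \<equiv> gamma \<theta> n a g"

lemma g_nz: "g \<noteq> 0" and h_nz: "h \<noteq> 0"
  using X_nz[OF n, of a] hg sm_eq0 by auto

lemma c00: "coeff h 0 * coeff g 0 = - a"
proof -
  have "coeff (h \<diamondop> g) 0 = coeff h 0 * coeff g 0" by (simp add: coeff_sm)
  moreover have "coeff (xn_minus n a) 0 = - a" using n by (simp add: coeff_X)
  ultimately show ?thesis using hg by simp
qed

lemma g0: "coeff g 0 \<noteq> 0" and h0: "coeff h 0 \<noteq> 0"
  using c00 a by auto

lemma deg_hg: "degree h + degree g = n"
proof -
  have "degree (h \<diamondop> g) = n" using degree_X[OF n, of a] hg by simp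
  then show ?thesis using degree_sm[OF h_nz g_nz] by simp
qed

lemma c_nz: "cg \<noteq> 0"
  unfolding gamma_def using a g0 by simp

lemma K0: "monom 1 n \<diamondop> g = Tp n g \<diamondop> monom 1 n"
  by (rule poly_eqI) (simp add: coeff_monom_sm coeff_sm_monom1)

lemma const_const: "[:x:] \<diamondop> [:y:] = [:x * y:]"
  by (simp add: const_sm)

lemma K1: "Tp n g \<diamondop> [:a:] = Polynomial.smult cg g"
proof -
  define w where "w = monom 1 n - Tp n g \<diamondop> h"
  have "Tp n g \<diamondop> xn_minus n a = Tp n g \<diamondop> monom 1 n - Tp n g \<diamondop> [:a:]"
    unfolding xn_minus_def by (rule sm_minus_right)
  moreover have "Tp n g \<diamondop> xn_minus n a = (Tp n g \<diamondop> h) \<diamondop> g"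
    by (simp add: hg sm_assoc)
  ultimately have e1: "Tp n g \<diamondop> [:a:] = w \<diamondop> g"
    unfolding w_def by (simp add: sm_minus_left K0[symmetric])
  have dle: "degree (Tp n g \<diamondop> [:a:]) \<le> degree g"
    by (rule degree_le) (simp add: coeff_sm_const coeff_eq_0)
  obtain w0 where w0: "w = [:w0:]"
  proof (cases "w = 0")
    case True then show ?thesis using that[of 0] by simp
  next
    case False
    have "degree (w \<diamondop> g) = degree w + degree g" by (rule degree_sm[OF False g_nz])
    then have "degree w = 0" using dle e1 by simp
    then show ?thesis using that[of "coeff w 0"] degree_0_id by metis
  qed
  have e2: "Tp n g \<diamondop> [:a:] = Polynomial.smult w0 g" using e1 w0 by (simp add: const_sm)
  have "coeff (Tp n g \<diamondop> [:a:]) 0 = T n (coeff g 0) * a" by (simp add: coeff_sm_const)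
  moreover have "coeff (Polynomial.smult w0 g) 0 = w0 * coeff g 0" by simp
  ultimately have "w0 * coeff g 0 = T n (coeff g 0) * a" using e2 by simp
  then have "w0 = cg" unfolding gamma_def using g0 by (simp add: field_simps)
  then show ?thesis using e2 by simp
qed

lemma K1': "g \<diamondop> [:inverse a:] = Polynomial.smult (inverse cg) (Tp n g)"
proof -
  have "Tp n g = Tp n g \<diamondop> ([:a:] \<diamondop> [:inverse a:])" using a by (simp add: const_const one_pCons[symmetric])
  also have "\<dots> = Polynomial.smult cg (g \<diamondop> [:inverse a:])"
    by (simp add: sm_assoc[symmetric] K1 sm_smult_left)
  finally show ?thesis using c_nz by simp
qed

lemma K2: "g \<diamondop> [:inverse a:] \<diamondop> h = Polynomial.smult (inverse cg) (xn_minus n cg)"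
proof (rule sm_cancel_right[OF g_nz])
  have "g \<diamondop> [:inverse a:] \<diamondop> h \<diamondop> g = g \<diamondop> [:inverse a:] \<diamondop> xn_minus n a"
    by (simp add: sm_assoc hg)
  also have "\<dots> = g \<diamondop> [:inverse a:] \<diamondop> monom 1 n - g \<diamondop> ([:inverse a:] \<diamondop> [:a:])"
    unfolding xn_minus_def by (simp add: sm_minus_right sm_assoc)
  also have "\<dots> = Polynomial.smult (inverse cg) (Tp n g \<diamondop> monom 1 n) - g"
    using a by (simp add: const_const K1' sm_smult_left one_pCons[symmetric])
  also have "\<dots> = Polynomial.smult (inverse cg) (xn_minus n cg) \<diamondop> g"
    using c_nz unfolding xn_minus_def
    by (simp add: sm_smult_left sm_minus_left K0[symmetric] const_sm smult_diff_right)
  finally show "g \<diamondop> [:inverse a:] \<diamondop> h \<diamondop> g = Polynomial.smult (inverse cg) (xn_minus n cg) \<diamondop> g" .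
qed

lemma K3: "Tp n g \<diamondop> h = xn_minus n cg"
proof -
  have "Tp n g = Polynomial.smult cg (g \<diamondop> [:inverse a:])" using K1' c_nz by simp
  then have "Tp n g \<diamondop> h = Polynomial.smult cg (g \<diamondop> [:inverse a:] \<diamondop> h)" by (simp add: sm_smult_left)
  then show ?thesis using K2 c_nz by simp
qed

lemma rem_factor:
  "\<exists>p. rem n a (monom 1 i \<diamondop> g) = p \<diamondop> g"
proof -
  obtain q where q: "monom 1 i \<diamondop> g = q \<diamondop> xn_minus n a + rem n a (monom 1 i \<diamondop> g)"
    using rem_props[OF n] by blast
  have "rem n a (monom 1 i \<diamondop> g) = (monom 1 i - q \<diamondop> h) \<diamondop> g"
    using q by (simp add: sm_minus_left sm_assoc hg algebra_simps)
  then show ?thesis by blast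
qed

lemma part1: "rem n cg (rem n a (monom 1 i \<diamondop> g) \<diamondop> Polynomial.smult (inverse a) h) = 0"
proof -
  obtain p where p: "rem n a (monom 1 i \<diamondop> g) = p \<diamondop> g" using rem_factor by blast
  have "rem n a (monom 1 i \<diamondop> g) \<diamondop> Polynomial.smult (inverse a) h
      = p \<diamondop> (g \<diamondop> [:inverse a:] \<diamondop> h)"
    by (simp add: p const_sm[symmetric] sm_assoc)
  also have "\<dots> = p \<diamondop> (Polynomial.smult (inverse cg) (xn_minus n cg))" by (simp only: K2)
  also have "\<dots> = (p \<diamondop> [:inverse cg:]) \<diamondop> xn_minus n cg"
    by (simp only: const_sm[symmetric] sm_assoc)
  finally show ?thesis by (simp add: rem_mult_X[OF n])
qed


abbreviation hh where "hh \<equiv> rho_l \<theta> (theta_neg_pow \<theta> n h)"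

lemma tnp: "theta_neg_pow \<theta> n h = Vp n h" by (simp add: theta_neg_pow_def Vp_def)
lemma hh_rv: "hh = rv (degree h) (Vp n h)" by (simp add: tnp rho_rv)

lemma rvX: "rv n (xn_minus n (Vi n a)) = Polynomial.smult (- a) (xn_minus n (inverse a))"
proof (rule poly_eqI)
  fix i
  show "coeff (rv n (xn_minus n (Vi n a))) i = coeff (Polynomial.smult (- a) (xn_minus n (inverse a))) i"
  proof (cases "i \<le> n")
    case False then show ?thesis by (simp add: coeff_rv coeff_X)
  next
    case True
    consider "i = 0" | "i = n" | "0 < i \<and> i < n" using True by linarith
    then show ?thesis
    proof cases
      case 1 then show ?thesis using n a by (simp add: coeff_rv coeff_X)
    next
      case 2 then show ?thesis using n a by (simp add: coeff_rv coeff_X)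
    next
      case 3
      then have "n - i \<noteq> n" "n - i \<noteq> 0" "i \<noteq> 0" "i \<noteq> n" by auto
      then show ?thesis using 3 by (simp add: coeff_rv coeff_X)
    qed
  qed
qed

lemma L1: "\<exists>g'. xn_minus n (inverse a) = g' \<diamondop> hh"
proof -
  have "Vp n (xn_minus n a) = Vp n h \<diamondop> Vp n g" using hg by (simp add: Vp_sm)
  then have vh: "Vp n h \<diamondop> Vp n g = xn_minus n (Vi n a)" by (simp add: Vp_X)
  have nz: "Vp n h \<noteq> 0" "Vp n g \<noteq> 0" using h_nz g_nz by (simp_all add: Vp_eq0)
  have "rho_l \<theta> (Vp n h \<diamondop> Vp n g) = Tp (degree h) (rho_l \<theta> (Vp n g)) \<diamondop> hh"
    using rho_sm[OF nz] by (simp add: tnp)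
  moreover have "rho_l \<theta> (Vp n h \<diamondop> Vp n g) = Polynomial.smult (- a) (xn_minus n (inverse a))"
    unfolding vh rho_rv degree_X[OF n] by (rule rvX)
  ultimately have "Polynomial.smult (- a) (xn_minus n (inverse a)) = Tp (degree h) (rho_l \<theta> (Vp n g)) \<diamondop> hh"
    by simp
  then have eq: "Polynomial.smult (- a) (xn_minus n (inverse a)) = Tp (degree h) (rho_l \<theta> (Vp n g)) \<diamondop> hh" .
  have "xn_minus n (inverse a) = Polynomial.smult (- inverse a) (Polynomial.smult (- a) (xn_minus n (inverse a)))"
    using a by simp
  also have "\<dots> = Polynomial.smult (- inverse a) (Tp (degree h) (rho_l \<theta> (Vp n g)) \<diamondop> hh)"
    by (simp only: eq)
  also have "\<dots> = Polynomial.smult (- inverse a) (Tp (degree h) (rho_l \<theta> (Vp n g))) \<diamondop> hh"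
    by (simp only: sm_smult_left)
  finally show ?thesis by blast
qed

lemma deg_hh: "degree hh = degree h"
proof (rule antisym)
  show "degree hh \<le> degree h" unfolding hh_rv by (rule degree_le) (simp add: coeff_rv)
  have "coeff hh (degree h) \<noteq> 0" unfolding hh_rv using h0 by (simp add: coeff_rv)
  then show "degree h \<le> degree hh" by (rule le_degree)
qed

lemma hh_nz: "hh \<noteq> 0"
proof
  assume "hh = 0"
  then have "coeff hh (degree h) = 0" by simp
  moreover have "coeff hh (degree h) \<noteq> 0" unfolding hh_rv using h0 by (simp add: coeff_rv)
  ultimately show False by simp
qed

lemma shift_hh: "monom 1 t \<diamondop> hh = rv (degree h + t) (Vp n h)"
proof (rule poly_eqI)
  fix l
  let ?m = "degree h"
  show "coeff (monom 1 t \<diamondop> hh) l = coeff (rv (?m + t) (Vp n h)) l"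
  proof (cases "t \<le> l")
    case False
    then have "?m < ?m + t - l" by simp
    then have "coeff h (?m + t - l) = 0" by (simp add: coeff_eq_0)
    then show ?thesis using False by (simp add: coeff_monom_sm coeff_rv)
  next
    case True
    have e: "T t (T (l - t) x) = T l x" for x using True by simp
    have e2: "?m - (l - t) = ?m + t - l" using True by simp
    show ?thesis using True unfolding hh_rv
      by (simp add: coeff_monom_sm coeff_rv e2 del: T_T) (auto simp: e)
  qed
qed

lemma L5: "g \<diamondop> Vp n h = xn_minus n (Vi n cg)"
proof -
  have "Vp n (Tp n g \<diamondop> h) = g \<diamondop> Vp n h" by (simp add: Vp_sm Vp_Tp)
  then show ?thesis using K3 by (simp add: Vp_X)
qed

lemma deg_lt:
  assumes "\<forall>l\<ge>n. coeff r l = 0" "r \<noteq> 0" shows "degree r < n"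
proof -
  have "degree r \<le> n - 1" using assms(1) n by (intro degree_le) auto
  then show ?thesis using n by simp
qed

lemma part2:
  "(\<Sum>l<n. coeff (rem n a (monom 1 i \<diamondop> g)) l * coeff (rem n (inverse a) (monom 1 j \<diamondop> hh)) l) = 0"
proof -
  define r where "r = rem n a (monom 1 i \<diamondop> g)"
  define B where "B = rem n (inverse a) (monom 1 j \<diamondop> hh)"
  define m where "m = degree h"
  define Vh where "Vh = Vp n h"
  obtain p where p: "r = p \<diamondop> g" using rem_factor unfolding r_def by blast
  obtain g' where g': "xn_minus n (inverse a) = g' \<diamondop> hh" using L1 by blast
  obtain q' where q': "monom 1 j \<diamondop> hh = q' \<diamondop> xn_minus n (inverse a) + B"
    using rem_props[OF n] unfolding B_def by blast
  define p' where "p' = monom 1 j - q' \<diamondop> g'"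
  have Bp: "B = p' \<diamondop> hh"
    using q' unfolding p'_def g' by (simp add: sm_minus_left sm_assoc algebra_simps)
  have r0: "\<forall>l\<ge>n. coeff r l = 0" unfolding r_def using rem_props[OF n] by blast
  have B0: "\<forall>l\<ge>n. coeff B l = 0" unfolding B_def using rem_props[OF n] by blast
  show ?thesis
  proof (cases "r = 0 \<or> B = 0")
    case True then show ?thesis unfolding r_def[symmetric] B_def[symmetric] by auto
  next
    case False
    then have rnz: "r \<noteq> 0" and Bnz: "B \<noteq> 0" by auto
    have pnz: "p \<noteq> 0" using rnz p by auto
    have p'nz: "p' \<noteq> 0" using Bnz Bp by auto
    have "degree r < n" by (rule deg_lt[OF r0 rnz])
    then have dp: "degree p < m" using degree_sm[OF pnz g_nz] p deg_hg unfolding m_def by simp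
    have "degree B < n" by (rule deg_lt[OF B0 Bnz])
    then have dp': "degree p' + m < n" using degree_sm[OF p'nz hh_nz] Bp deg_hh unfolding m_def by simp
    have Bsum: "B = (\<Sum>t\<le>degree p'. Polynomial.smult (coeff p' t) (rv (m + t) Vh))"
    proof -
      have "B = (\<Sum>t\<le>degree p'. monom (coeff p' t) t) \<diamondop> hh" using Bp by (simp add: poly_as_sum_of_monoms)
      also have "\<dots> = (\<Sum>t\<le>degree p'. monom (coeff p' t) t \<diamondop> hh)" by (rule sm_sum_left)
      also have "\<dots> = (\<Sum>t\<le>degree p'. Polynomial.smult (coeff p' t) (rv (m + t) Vh))"
        by (intro sum.cong refl) (subst monom_sm_smult, simp only: shift_hh m_def Vh_def)
      finally show ?thesis .
    qed
    have rV: "r \<diamondop> Vh = p \<diamondop> xn_minus n (Vi n cg)"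
      unfolding p Vh_def by (simp add: sm_assoc L5)
    have "(\<Sum>l<n. coeff r l * coeff B l)
        = (\<Sum>l<n. \<Sum>t\<le>degree p'. coeff r l * (coeff p' t * coeff (rv (m + t) Vh) l))"
      by (simp add: Bsum coeff_sum sum_distrib_left)
    also have "\<dots> = (\<Sum>t\<le>degree p'. coeff p' t * (\<Sum>l<n. coeff r l * coeff (rv (m + t) Vh) l))"
      by (subst sum.swap) (simp add: sum_distrib_left mult.left_commute)
    also have "\<dots> = (\<Sum>t\<le>degree p'. coeff p' t * coeff (r \<diamondop> Vh) (m + t))"
    proof (intro sum.cong refl)
      fix t assume "t \<in> {..degree p'}"
      then have "m + t < n" using dp' by simp
      then show "coeff p' t * (\<Sum>l<n. coeff r l * coeff (rv (m + t) Vh) l) = coeff p' t * coeff (r \<diamondop> Vh) (m + t)"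
        by (simp add: pairing)
    qed
    also have "\<dots> = 0"
    proof (intro sum.neutral ballI)
      fix t assume "t \<in> {..degree p'}"
      then have "m + t < n" using dp' by simp
      then have "coeff (p \<diamondop> xn_minus n (Vi n cg)) (m + t) = 0"
        using dp by (intro coeff_sm_X_low) auto
      then show "coeff p' t * coeff (r \<diamondop> Vh) (m + t) = 0" by (simp add: rV)
    qed
    finally show ?thesis unfolding r_def B_def .
  qed
qed

end

end

theorem theorem5p8:
  fixes \<theta> :: "'a::{finite, field} \<Rightarrow> 'a" and n :: nat and a :: 'a and g h :: "'a poly"
  assumes "field_aut \<theta>"
    and "a \<noteq> 0"
    and "xn_minus n a = skew_mult \<theta> h g"
  shows "Mtheta \<theta> n a g * Mtheta \<theta> n (gamma \<theta> n a g) (Polynomial.smult (inverse a) h) = 0\<^sub>m n n \<and>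
         Mtheta \<theta> n a g * transpose_mat (Mtheta \<theta> n (inverse a) (rho_l \<theta> (theta_neg_pow \<theta> n h))) = 0\<^sub>m n n"
proof -
  interpret skew \<theta> by unfold_locales (rule assms(1))
  show ?thesis
  proof (cases "n = 0")
    case True
    then show ?thesis by (auto intro!: eq_matI simp: Mtheta_def)
  next
    case False
    then have n: "n > 0" by simp
    have A: "Mtheta \<theta> n a g * Mtheta \<theta> n (gamma \<theta> n a g) (Polynomial.smult (inverse a) h) = 0\<^sub>m n n"
    proof (rule eq_matI)
      fix i j assume "i < dim_row (0\<^sub>m n n :: 'a mat)" "j < dim_col (0\<^sub>m n n :: 'a mat)"
      then have i: "i < n" and j: "j < n" by auto
      show "(Mtheta \<theta> n a g * Mtheta \<theta> n (gamma \<theta> n a g) (Polynomial.smult (inverse a) h)) $$ (i, j)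
          = (0\<^sub>m n n :: 'a mat) $$ (i, j)"
        using M_mult_entry[OF n i j] part1[OF n assms(2) assms(3)] i j by simp
    qed (simp_all add: Mtheta_def)
    have B: "Mtheta \<theta> n a g * transpose_mat (Mtheta \<theta> n (inverse a) (rho_l \<theta> (theta_neg_pow \<theta> n h))) = 0\<^sub>m n n"
    proof (rule eq_matI)
      fix i j assume "i < dim_row (0\<^sub>m n n :: 'a mat)" "j < dim_col (0\<^sub>m n n :: 'a mat)"
      then have i: "i < n" and j: "j < n" by auto
      show "(Mtheta \<theta> n a g * transpose_mat (Mtheta \<theta> n (inverse a) (rho_l \<theta> (theta_neg_pow \<theta> n h)))) $$ (i, j)
          = (0\<^sub>m n n :: 'a mat) $$ (i, j)"
        using M_multT_entry[OF n i j] part2[OF n assms(2) assms(3)] i j by simp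
    qed (simp_all add: Mtheta_def)
    show ?thesis using A B by blast
  qed
qed

end
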